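(* Let $\bm\sigma=\sigma_1\bm e_1+\dots+\sigma_r\bm e_r\in\mathbb{Z}^r$ be a changemaker vector such that $L=\langle\bm\sigma\rangle^\perp\subseteq\mathbb{Z}^r$ admits an obtuse superbase. Suppose that for some $\ell\ge4$ and some $b>1$ the coefficients satisfy $\sigma_{b-1}<\sigma_b=\sigma_{b+1}=\dots=\sigma_{b+\ell-1}$. Then every $\sigma_k$ with $\sigma_k>\sigma_b$ satisfies $\sigma_k\ge(\ell-1)\sigma_b$.
   Context: $\mathbb{Z}^r$ has the standard pairing. A changemaker vector is $\bm\sigma=\sum\sigma_i\bm e_i$ with $\sigma_1=1$ and $\sigma_{i-1}\le\sigma_i\le1+\sigma_1+\dots+\sigma_{i-1}$ for $i\ge2$. An obtuse superbase of a rank-$k$ lattice is a spanning set $\{v_0,\dots,v_k\}$ with $v_i\cdot v_j\le0$ for $i\ne j$ and $\sum v_i=0$. *)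

theory Defs
  imports Main
begin

text \<open>Vectors of Z^r are represented as functions nat => int supported on {1..r};
  e_i is the i-th coordinate.\<close>

definition zvec :: "nat \<Rightarrow> (nat \<Rightarrow> int) set" where
  "zvec r = {v. \<forall>i. i \<notin> {1..r} \<longrightarrow> v i = 0}"

definition pairing :: "nat \<Rightarrow> (nat \<Rightarrow> int) \<Rightarrow> (nat \<Rightarrow> int) \<Rightarrow> int" where
  "pairing r v w = (\<Sum>i=1..r. v i * w i)"

definition changemaker :: "nat \<Rightarrow> (nat \<Rightarrow> int) \<Rightarrow> bool" where
  "changemaker r \<sigma> \<longleftrightarrow> \<sigma> \<in> zvec r \<and> r \<ge> 1 \<and> \<sigma> 1 = 1 \<and>
     (\<forall>i\<in>{2..r}. \<sigma> (i - 1) \<le> \<sigma> i \<and> \<sigma> i \<le> 1 + (\<Sum>j=1..<i. \<sigma> j))"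

definition orth_lattice :: "nat \<Rightarrow> (nat \<Rightarrow> int) \<Rightarrow> (nat \<Rightarrow> int) set" where
  "orth_lattice r \<sigma> = {v \<in> zvec r. pairing r v \<sigma> = 0}"

definition int_span :: "nat \<Rightarrow> (nat \<Rightarrow> nat \<Rightarrow> int) \<Rightarrow> (nat \<Rightarrow> int) set" where
  "int_span k v = {x. \<exists>c :: nat \<Rightarrow> int. x = (\<lambda>i. \<Sum>j\<le>k. c j * v j i)}"

definition obtuse_superbase :: "nat \<Rightarrow> nat \<Rightarrow> (nat \<Rightarrow> int) set \<Rightarrow> (nat \<Rightarrow> nat \<Rightarrow> int) \<Rightarrow> bool" where
  "obtuse_superbase r k L v \<longleftrightarrow>
     int_span k v = L \<and>
     (\<forall>i\<le>k. \<forall>j\<le>k. i \<noteq> j \<longrightarrow> pairing r (v i) (v j) \<le> 0) \<and>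
     (\<lambda>t. \<Sum>i\<le>k. v i t) = (\<lambda>_. 0)"

text \<open>L = sigma^perp has rank r - 1 (sigma is nonzero since sigma_1 = 1).\<close>
definition admits_obtuse_superbase :: "nat \<Rightarrow> (nat \<Rightarrow> int) \<Rightarrow> bool" where
  "admits_obtuse_superbase r \<sigma> \<longleftrightarrow>
     (\<exists>v. obtuse_superbase r (r - 1) (orth_lattice r \<sigma>) v)"

end

theory Submission
  imports Defs
begin


definition lin :: "nat set \<Rightarrow> (nat \<Rightarrow> int) \<Rightarrow> (nat \<Rightarrow> nat \<Rightarrow> int) \<Rightarrow> nat \<Rightarrow> int" where
  "lin U c v = (\<lambda>t. \<Sum>u\<in>U. c u * v u t)"

lemma pairing_sym: "pairing r x y = pairing r y x"
  unfolding pairing_def by (simp add: mult.commute)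

lemma pairing_lin_left:
  "pairing r (lin U c v) y = (\<Sum>u\<in>U. c u * pairing r (v u) y)"
  unfolding pairing_def lin_def
  by (simp add: sum_distrib_left sum_distrib_right mult.assoc sum.swap[of _ U])

lemma pairing_lin_right:
  "pairing r y (lin U c v) = (\<Sum>u\<in>U. c u * pairing r y (v u))"
  using pairing_lin_left[of r U c v y] by (simp add: pairing_sym)

lemma pairing_add_left: "pairing r (\<lambda>t. x t + y t) z = pairing r x z + pairing r y z"
  unfolding pairing_def by (simp add: algebra_simps sum.distrib)

lemma pairing_diff_left: "pairing r (\<lambda>t. x t - y t) z = pairing r x z - pairing r y z"
  unfolding pairing_def by (simp add: algebra_simps sum_subtractf)

lemma lin_in_L:
  assumes "\<forall>u\<in>U. v u \<in> orth_lattice r \<sigma>"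
  shows "lin U c v \<in> orth_lattice r \<sigma>"
proof -
  have z: "lin U c v \<in> zvec r"
    using assms unfolding zvec_def orth_lattice_def lin_def by auto
  have "pairing r (lin U c v) \<sigma> = 0"
    unfolding pairing_lin_left using assms unfolding orth_lattice_def by simp
  then show ?thesis using z unfolding orth_lattice_def by simp
qed

lemma lin_diff: "lin U (\<lambda>u. c u - d u) v = (\<lambda>t. lin U c v t - lin U d v t)"
  unfolding lin_def by (simp add: algebra_simps sum_subtractf)

lemma lin_add: "lin U (\<lambda>u. c u + d u) v = (\<lambda>t. lin U c v t + lin U d v t)"
  unfolding lin_def by (simp add: algebra_simps sum.distrib)

lemma lin_const: "lin U (\<lambda>_. C) v = (\<lambda>t. C * lin U (\<lambda>_. 1) v t)"
  unfolding lin_def by (simp add: sum_distrib_left)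

lemma pairing_self_zero:
  assumes "x \<in> zvec r" "pairing r x x = 0"
  shows "x = (\<lambda>_. 0)"
proof
  fix t
  have "\<forall>i\<in>{1..r}. x i * x i = 0"
    using assms(2) unfolding pairing_def
    by (subst (asm) sum_nonneg_eq_0_iff) auto
  then show "x t = 0" using assms(1) unfolding zvec_def by (cases "t \<in> {1..r}") auto
qed

definition sbase :: "nat \<Rightarrow> (nat \<Rightarrow> int) \<Rightarrow> nat set \<Rightarrow> (nat \<Rightarrow> nat \<Rightarrow> int) \<Rightarrow> bool" where
  "sbase r \<sigma> U v \<longleftrightarrow> finite U \<and> (\<forall>u\<in>U. v u \<in> orth_lattice r \<sigma>) \<and>
     (\<forall>x\<in>orth_lattice r \<sigma>. \<exists>c. x = lin U c v) \<and>
     (\<forall>u\<in>U. \<forall>w\<in>U. u \<noteq> w \<longrightarrow> pairing r (v u) (v w) \<le> 0) \<and>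
     lin U (\<lambda>_. 1) v = (\<lambda>_. 0)"


lemma sb_fin: "sbase r \<sigma> U v \<Longrightarrow> finite U" unfolding sbase_def by blast
lemma sb_L: "sbase r \<sigma> U v \<Longrightarrow> \<forall>u\<in>U. v u \<in> orth_lattice r \<sigma>" unfolding sbase_def by blast
lemma sb_span: "sbase r \<sigma> U v \<Longrightarrow> x \<in> orth_lattice r \<sigma> \<Longrightarrow> \<exists>c. x = lin U c v" unfolding sbase_def by blast
lemma sb_pw: "sbase r \<sigma> U v \<Longrightarrow> u \<in> U \<Longrightarrow> w \<in> U \<Longrightarrow> u \<noteq> w \<Longrightarrow> pairing r (v u) (v w) \<le> 0"
  unfolding sbase_def by blast
lemma sb_sum: "sbase r \<sigma> U v \<Longrightarrow> lin U (\<lambda>_. 1) v = (\<lambda>_. 0)" unfolding sbase_def by blast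
lemma sb_sum_t: "sbase r \<sigma> U v \<Longrightarrow> lin U (\<lambda>_. 1) v t = 0" using sb_sum by metis

definition conn :: "nat set \<Rightarrow> (nat \<Rightarrow> nat \<Rightarrow> int) \<Rightarrow> bool" where
  "conn U v \<longleftrightarrow> (\<forall>C. C \<subseteq> U \<longrightarrow> C \<noteq> {} \<longrightarrow> C \<noteq> U \<longrightarrow> lin C (\<lambda>_. 1) v \<noteq> (\<lambda>_. 0))"

definition irr :: "nat \<Rightarrow> (nat \<Rightarrow> int) \<Rightarrow> (nat \<Rightarrow> int) \<Rightarrow> bool" where
  "irr r \<sigma> x \<longleftrightarrow> x \<in> orth_lattice r \<sigma> \<and> x \<noteq> (\<lambda>_. 0) \<and>
     (\<forall>y z. y \<in> orth_lattice r \<sigma> \<longrightarrow> z \<in> orth_lattice r \<sigma> \<longrightarrow> x = (\<lambda>t. y t + z t) \<longrightarrow>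
        y \<noteq> (\<lambda>_. 0) \<longrightarrow> z \<noteq> (\<lambda>_. 0) \<longrightarrow> pairing r y z < 0)"

lemma lin_indicator:
  assumes "finite U"
  shows "lin U (\<lambda>u. if P u then 1 else 0) v = lin {u\<in>U. P u} (\<lambda>_. 1) v"
  unfolding lin_def
proof
  fix t
  have "(\<Sum>u\<in>U. (if P u then 1 else 0) * v u t) = (\<Sum>u\<in>U. if P u then v u t else 0)"
    by (rule sum.cong) auto
  also have "\<dots> = (\<Sum>u\<in>{u\<in>U. P u}. v u t)"
    using assms by (rule sum.inter_filter[symmetric])
  finally show "(\<Sum>u\<in>U. (if P u then 1 else 0) * v u t) = (\<Sum>u\<in>{u\<in>U. P u}. 1 * v u t)" by simp
qed

lemma sum_pi_zero:
  assumes "sbase r \<sigma> U v"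
  shows "(\<Sum>u\<in>U. pairing r (v u) y) = 0"
proof -
  have "(\<Sum>u\<in>U. pairing r (v u) y) = pairing r (lin U (\<lambda>_. 1) v) y"
    by (simp add: pairing_lin_left)
  also have "lin U (\<lambda>_. 1) v = (\<lambda>_. 0)" using sb_sum[OF assms] .
  then have "pairing r (lin U (\<lambda>_. 1) v) y = 0" unfolding pairing_def by simp
  finally show ?thesis .
qed

lemma pi_nonpos:
  assumes "sbase r \<sigma> U v" "A \<subseteq> U" "u \<in> U" "u \<notin> A"
  shows "pairing r (v u) (lin A (\<lambda>_. 1) v) \<le> 0"
proof -
  have "pairing r (v u) (lin A (\<lambda>_. 1) v) = (\<Sum>w\<in>A. pairing r (v u) (v w))"
    by (simp add: pairing_lin_right)
  also have "\<dots> \<le> 0"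
  proof (rule sum_nonpos)
    fix w assume "w \<in> A"
    then have "w \<in> U" "u \<noteq> w" using assms by auto
    moreover have "\<forall>u\<in>U. \<forall>w\<in>U. u \<noteq> w \<longrightarrow> pairing r (v u) (v w) \<le> 0"
      using sb_pw[OF assms(1)] by blast
    ultimately show "pairing r (v u) (v w) \<le> 0" using assms(3) by blast
  qed
  finally show ?thesis .
qed

lemma kernel:
  assumes sb: "sbase r \<sigma> U v" and cn: "conn U v" and z: "lin U c v = (\<lambda>_. 0)"
    and "u \<in> U" "w \<in> U"
  shows "c u = c w"
proof (rule ccontr)
  assume ne: "c u \<noteq> c w"
  have fin: "finite U" using sb_fin[OF sb] .
  define M where "M = Max (c ` U)"
  define A where "A = {x\<in>U. c x = M}"
  have Mge: "\<forall>x\<in>U. c x \<le> M" unfolding M_def using fin by auto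
  have "M \<in> c ` U" unfolding M_def using fin \<open>u \<in> U\<close> by (intro Max_in) auto
  then have Ane: "A \<noteq> {}" unfolding A_def by auto
  have AU: "A \<subseteq> U" unfolding A_def by auto
  have AneU: "A \<noteq> U" using ne \<open>u \<in> U\<close> \<open>w \<in> U\<close> unfolding A_def by (metis (mono_tags, lifting) mem_Collect_eq)
  define X where "X = lin A (\<lambda>_. 1) v"
  have Xne: "X \<noteq> (\<lambda>_. 0)" using cn AU Ane AneU unfolding conn_def X_def by blast
  define \<pi> where "\<pi> x = pairing r (v x) X" for x
  have s0: "(\<Sum>x\<in>U. \<pi> x) = 0" unfolding \<pi>_def using sum_pi_zero[OF sb] .
  have "(\<Sum>x\<in>U. c x * \<pi> x) = pairing r (lin U c v) X"
    unfolding \<pi>_def by (simp add: pairing_lin_left)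
  also have "\<dots> = 0" using z unfolding pairing_def by simp
  finally have s1: "(\<Sum>x\<in>U. c x * \<pi> x) = 0" .
  have "(\<Sum>x\<in>U. (c x - M) * \<pi> x) = (\<Sum>x\<in>U. c x * \<pi> x) - M * (\<Sum>x\<in>U. \<pi> x)"
    by (simp add: algebra_simps sum_subtractf sum_distrib_left)
  with s0 s1 have s2: "(\<Sum>x\<in>U. (c x - M) * \<pi> x) = 0" by simp
  have tnn: "\<forall>x\<in>U. 0 \<le> (c x - M) * \<pi> x"
  proof
    fix x assume xU: "x \<in> U"
    show "0 \<le> (c x - M) * \<pi> x"
    proof (cases "x \<in> A")
      case True then show ?thesis unfolding A_def by simp
    next
      case False
      have "\<pi> x \<le> 0" unfolding \<pi>_def X_def using pi_nonpos[OF sb AU xU False] .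
      moreover have "c x - M \<le> 0" using Mge xU by auto
      ultimately show ?thesis by (simp add: mult_nonpos_nonpos)
    qed
  qed
  have allz: "\<forall>x\<in>U. (c x - M) * \<pi> x = 0"
    using s2 tnn fin by (subst (asm) sum_nonneg_eq_0_iff) auto
  have pz: "\<forall>x\<in>U - A. \<pi> x = 0"
  proof
    fix x assume "x \<in> U - A"
    then have "c x \<noteq> M" "x \<in> U" unfolding A_def by auto
    with allz show "\<pi> x = 0" by auto
  qed
  have "pairing r X X = (\<Sum>x\<in>A. \<pi> x)"
    unfolding \<pi>_def X_def by (simp add: pairing_lin_left)
  also have "\<dots> = (\<Sum>x\<in>U. \<pi> x) - (\<Sum>x\<in>U - A. \<pi> x)"
    using fin AU by (simp add: sum_diff finite_subset)
  also have "\<dots> = 0" using s0 pz by simp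
  finally have "pairing r X X = 0" .
  moreover have "X \<in> zvec r"
    unfolding X_def using lin_in_L[of A v r \<sigma> "\<lambda>_. 1"] sb_L[OF sb] AU unfolding orth_lattice_def by blast
  ultimately have "X = (\<lambda>_. 0)" using pairing_self_zero by blast
  with Xne show False by simp
qed


lemma cut_range:
  assumes sb: "sbase r \<sigma> U v" and cn: "conn U v" and ir: "irr r \<sigma> x"
    and xr: "x = lin U c v" and "u \<in> U" "w \<in> U"
  shows "\<bar>c u - c w\<bar> \<le> 1"
proof (cases "\<forall>a\<in>U. \<forall>b\<in>U. c a = c b")
  case True
  then have "c u = c w" using \<open>u \<in> U\<close> \<open>w \<in> U\<close> by blast
  then show ?thesis by simp
next
  case False
  have fin: "finite U" using sb_fin[OF sb] .
  have vL: "\<forall>u\<in>U. v u \<in> orth_lattice r \<sigma>" using sb_L[OF sb] .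
  define M where "M = Max (c ` U)"
  define A where "A = {x\<in>U. c x = M}"
  have Mge: "\<forall>x\<in>U. c x \<le> M" unfolding M_def using fin by auto
  have "M \<in> c ` U" unfolding M_def using fin \<open>u \<in> U\<close> by (intro Max_in) auto
  then have Ane: "A \<noteq> {}" unfolding A_def by auto
  have AU: "A \<subseteq> U" unfolding A_def by auto
  have AneU: "A \<noteq> U" using False unfolding A_def by (metis (mono_tags, lifting) mem_Collect_eq)
  define d where "d x = c x - (if c x = M then 1 else 0)" for x
  define y where "y = lin U (\<lambda>x. if c x = M then 1 else 0) v"
  define z where "z = lin U d v"
  have yA: "y = lin A (\<lambda>_. 1) v" unfolding y_def A_def using lin_indicator[OF fin] by simp
  have "lin A (\<lambda>_. 1) v \<noteq> (\<lambda>_. 0)" using cn AU Ane AneU unfolding conn_def by blast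
  then have yne: "y \<noteq> (\<lambda>_. 0)" using yA by simp
  have yL: "y \<in> orth_lattice r \<sigma>" unfolding y_def using lin_in_L[OF vL] .
  have zL: "z \<in> orth_lattice r \<sigma>" unfolding z_def using lin_in_L[OF vL] .
  have xyz: "x = (\<lambda>t. y t + z t)"
    unfolding xr y_def z_def d_def lin_add[symmetric] by simp
  define \<pi> where "\<pi> x = pairing r (v x) y" for x
  have s0: "(\<Sum>x\<in>U. \<pi> x) = 0" unfolding \<pi>_def using sum_pi_zero[OF sb] .
  have "pairing r y z = pairing r z y" by (rule pairing_sym)
  also have "\<dots> = (\<Sum>x\<in>U. d x * \<pi> x)" unfolding z_def \<pi>_def by (simp add: pairing_lin_left)
  also have "\<dots> = (\<Sum>x\<in>U. (d x - (M - 1)) * \<pi> x) + (M - 1) * (\<Sum>x\<in>U. \<pi> x)"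
    by (simp add: sum_distrib_left sum.distrib[symmetric] algebra_simps)
  also have "\<dots> = (\<Sum>x\<in>U. (d x - (M - 1)) * \<pi> x)" using s0 by simp
  also have "\<dots> \<ge> 0"
  proof (rule sum_nonneg)
    fix x assume xU: "x \<in> U"
    show "0 \<le> (d x - (M - 1)) * \<pi> x"
    proof (cases "x \<in> A")
      case True then show ?thesis unfolding A_def d_def by simp
    next
      case False
      have "\<pi> x \<le> 0" unfolding \<pi>_def yA using pi_nonpos[OF sb AU xU False] .
      moreover have "d x - (M - 1) \<le> 0"
      proof -
        have "c x \<noteq> M" using False xU unfolding A_def by simp
        moreover have "c x \<le> M" using Mge xU by blast
        ultimately show ?thesis unfolding d_def by simp
      qed
      ultimately show ?thesis by (simp add: mult_nonpos_nonpos)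
    qed
  qed
  finally have pyz: "pairing r y z \<ge> 0" .
  have irr3: "\<forall>y z. y \<in> orth_lattice r \<sigma> \<longrightarrow> z \<in> orth_lattice r \<sigma> \<longrightarrow> x = (\<lambda>t. y t + z t) \<longrightarrow>
        y \<noteq> (\<lambda>_. 0) \<longrightarrow> z \<noteq> (\<lambda>_. 0) \<longrightarrow> pairing r y z < 0"
    using ir unfolding irr_def by blast
  have "z = (\<lambda>_. 0)"
  proof (rule ccontr)
    assume "z \<noteq> (\<lambda>_. 0)"
    then have "pairing r y z < 0" using irr3 yL zL xyz yne by blast
    with pyz show False by simp
  qed
  then have "d u = d w" using kernel[OF sb cn _ \<open>u \<in> U\<close> \<open>w \<in> U\<close>] unfolding z_def by blast
  then show ?thesis unfolding d_def by (auto split: if_splits)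
qed


lemma L_add:
  assumes "x \<in> orth_lattice r \<sigma>" "y \<in> orth_lattice r \<sigma>"
  shows "(\<lambda>t. x t + y t) \<in> orth_lattice r \<sigma>"
  using assms unfolding orth_lattice_def zvec_def by (auto simp: pairing_add_left)

lemma L_diff:
  assumes "x \<in> orth_lattice r \<sigma>" "y \<in> orth_lattice r \<sigma>"
  shows "(\<lambda>t. x t - y t) \<in> orth_lattice r \<sigma>"
  using assms unfolding orth_lattice_def zvec_def by (auto simp: pairing_diff_left)

lemma merge:
  assumes sb: "sbase r \<sigma> U v" and CU: "C \<subseteq> U" "C \<noteq> {}" "C \<noteq> U"
    and z: "lin C (\<lambda>_. 1) v = (\<lambda>_. 0)"
  shows "\<exists>U' v'. sbase r \<sigma> U' v' \<and> card U' < card U"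
proof -
  have fin: "finite U" using sb_fin[OF sb] .
  obtain a where aC: "a \<in> C" using CU by auto
  obtain b where bU: "b \<in> U" "b \<notin> C" using CU by auto
  have aU: "a \<in> U" using aC CU by auto
  have ab: "a \<noteq> b" using aC bU by auto
  define U' where "U' = U - {b}"
  define v' where "v' = v(a := (\<lambda>t. v a t + v b t))"
  have aU': "a \<in> U'" unfolding U'_def using aU ab by auto
  have fin': "finite U'" unfolding U'_def using fin by auto
  have vL: "\<forall>u\<in>U. v u \<in> orth_lattice r \<sigma>" using sb_L[OF sb] .
  have v'L: "\<forall>u\<in>U'. v' u \<in> orth_lattice r \<sigma>"
    unfolding v'_def U'_def using vL aU bU by (auto intro: L_add)
  have key: "lin U' d v' = lin U d v" if "d a = d b" for d
  proof
    fix t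
    have "lin U' d v' t = (\<Sum>u\<in>U'. d u * v u t) + d a * v b t"
    proof -
      have "lin U' d v' t = (\<Sum>u\<in>U'. d u * v u t + (if u = a then d a * v b t else 0))"
        unfolding lin_def v'_def by (intro sum.cong) (auto simp: algebra_simps)
      also have "\<dots> = (\<Sum>u\<in>U'. d u * v u t) + d a * v b t"
        using fin' aU' by (simp add: sum.distrib)
      finally show ?thesis .
    qed
    also have "\<dots> = lin U d v t"
      unfolding lin_def U'_def using fin bU that by (simp add: sum.remove[of U b])
    finally show "lin U' d v' t = lin U d v t" .
  qed
  have zc: "lin (U - C) (\<lambda>_. 1) v = (\<lambda>_. 0)"
  proof
    fix t
    have "lin (U - C) (\<lambda>_. 1) v t = lin U (\<lambda>_. 1) v t - lin C (\<lambda>_. 1) v t"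
      unfolding lin_def using fin CU by (simp add: sum_diff finite_subset)
    then show "lin (U - C) (\<lambda>_. 1) v t = 0" using sb_sum_t[OF sb] z by simp
  qed
  have span: "\<forall>x\<in>orth_lattice r \<sigma>. \<exists>c. x = lin U' c v'"
  proof
    fix x assume "x \<in> orth_lattice r \<sigma>"
    then obtain c where xc: "x = lin U c v" using sb_span[OF sb] by blast
    define d where "d u = c u + (if u \<in> U - C then c a - c b else 0)" for u
    have "lin U d v = (\<lambda>t. lin U c v t + (c a - c b) * lin (U - C) (\<lambda>_. 1) v t)"
    proof
      fix t
      have "lin U d v t = lin U c v t + (\<Sum>u\<in>U. (if u \<in> U - C then c a - c b else 0) * v u t)"
        unfolding lin_def d_def by (simp add: algebra_simps sum.distrib)
      also have "(\<Sum>u\<in>U. (if u \<in> U - C then c a - c b else 0) * v u t)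
          = (\<Sum>u\<in>U - C. (c a - c b) * v u t)"
      proof -
        have "(\<Sum>u\<in>U. (if u \<in> U - C then c a - c b else 0) * v u t)
            = (\<Sum>u\<in>U. if u \<in> U - C then (c a - c b) * v u t else 0)"
          by (intro sum.cong) auto
        also have "\<dots> = (\<Sum>u\<in>U \<inter> (U - C). (c a - c b) * v u t)"
          using fin by (simp add: sum.inter_restrict)
        also have "U \<inter> (U - C) = U - C" by auto
        finally show ?thesis .
      qed
      finally show "lin U d v t = lin U c v t + (c a - c b) * lin (U - C) (\<lambda>_. 1) v t"
        unfolding lin_def by (simp add: sum_distrib_left)
    qed
    then have "lin U d v = x" using zc xc by simp
    moreover have "d a = d b" unfolding d_def using aC bU aU by simp
    ultimately show "\<exists>c. x = lin U' c v'" using key by metis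
  qed
  have pw: "\<forall>u\<in>U'. \<forall>w\<in>U'. u \<noteq> w \<longrightarrow> pairing r (v' u) (v' w) \<le> 0"
  proof (intro ballI impI)
    fix u w assume uw: "u \<in> U'" "w \<in> U'" "u \<noteq> w"
    have P: "\<forall>u\<in>U. \<forall>w\<in>U. u \<noteq> w \<longrightarrow> pairing r (v u) (v w) \<le> 0" using sb_pw[OF sb] by blast
    show "pairing r (v' u) (v' w) \<le> 0"
    proof (cases "u = a")
      case True
      then have "pairing r (v' u) (v' w) = pairing r (v a) (v w) + pairing r (v b) (v w)"
        unfolding v'_def using uw by (simp add: pairing_add_left)
      moreover have "pairing r (v a) (v w) \<le> 0" using P uw True aU unfolding U'_def by auto
      moreover have "pairing r (v b) (v w) \<le> 0" using P uw bU unfolding U'_def by auto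
      ultimately show ?thesis by simp
    next
      case ua: False
      show ?thesis
      proof (cases "w = a")
        case True
        then have "pairing r (v' u) (v' w) = pairing r (v a) (v u) + pairing r (v b) (v u)"
          unfolding v'_def using uw ua by (simp add: pairing_add_left pairing_sym[of r "v u"])
        moreover have "pairing r (v a) (v u) \<le> 0" using P uw True aU unfolding U'_def by auto
        moreover have "pairing r (v b) (v u) \<le> 0" using P uw bU unfolding U'_def by auto
        ultimately show ?thesis by simp
      next
        case False
        then show ?thesis using P uw ua unfolding v'_def U'_def by auto
      qed
    qed
  qed
  have sum0: "lin U' (\<lambda>_. 1) v' = (\<lambda>_. 0)" using key[of "\<lambda>_. 1"] sb_sum[OF sb] by simp
  have "sbase r \<sigma> U' v'" unfolding sbase_def by (intro conjI fin' v'L span pw sum0)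
  moreover have "card U' < card U"
  proof -
    have "card U > 0" using fin bU card_gt_0_iff by blast
    then show ?thesis unfolding U'_def using fin bU by simp
  qed
  ultimately show ?thesis by blast
qed

lemma exists_conn:
  assumes "sbase r \<sigma> U v"
  shows "\<exists>U v. sbase r \<sigma> U v \<and> conn U v"
  using assms
proof (induction "card U" arbitrary: U v rule: less_induct)
  case less
  show ?case
  proof (cases "conn U v")
    case True then show ?thesis using less.prems by blast
  next
    case False
    then obtain C where "C \<subseteq> U" "C \<noteq> {}" "C \<noteq> U" "lin C (\<lambda>_. 1) v = (\<lambda>_. 0)"
      unfolding conn_def by blast
    then obtain U' v' where "sbase r \<sigma> U' v'" "card U' < card U"
      using merge[OF less.prems] by blast
    then show ?thesis using less.hyps by blast
  qed
qed


lemma arith_core: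
 fixes X Y Z G G1 G2 G3 :: int
 assumes "X \<ge> 0" "Y \<ge> 0" "Z \<ge> 0" "X + Y + Z \<le> 1"
 and "\<bar>(G - X - 2*Y - 2*Z) - (G2 - 2)\<bar> \<le> 1" "\<bar>(G - Z) - G2\<bar> \<le> 1"
 and "\<bar>G2 - 2\<bar> \<le> 1" "\<bar>G2\<bar> \<le> 1"
 and "\<bar>G - X - 2*Y - 2*Z\<bar> \<le> 1" "\<bar>G - Z\<bar> \<le> 1"
 and "\<bar>(G - Y - 2*Z) - (G3 - 2)\<bar> \<le> 1" "\<bar>(G - X - Y - Z) - (G3 - 1)\<bar> \<le> 1"
 and "\<bar>G1 - (G3 - 2)\<bar> \<le> 1" "\<bar>(G1 - 1) - (G3 - 1)\<bar> \<le> 1"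
 and "\<bar>(G - Y - 2*Z) - G1\<bar> \<le> 1" "\<bar>(G - X - Y - Z) - (G1 - 1)\<bar> \<le> 1"
 and "\<bar>G1 - 1\<bar> \<le> 1" "\<bar>G1\<bar> \<le> 1"
 shows "(G1 = 0 \<and> G - Y - Z = 0) \<or> (G1 = 1 \<and> G - X - Y - 2*Z = 0)"
proof -
  have c: "(X = 0 \<and> Y = 0 \<and> Z = 0) \<or> (X = 1 \<and> Y = 0 \<and> Z = 0) \<or> (X = 0 \<and> Y = 1 \<and> Z = 0) \<or> (X = 0 \<and> Y = 0 \<and> Z = 1)"
    using assms(1-4) by arith
  show ?thesis using c assms(5-) unfolding abs_le_iff by (elim disjE) auto
qed
lemma tourn4:
  fixes P :: "nat \<Rightarrow> nat \<Rightarrow> bool"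
  assumes tot: "\<And>i j. i < 4 \<Longrightarrow> j < 4 \<Longrightarrow> i \<noteq> j \<Longrightarrow> P i j \<or> P j i"
  shows "\<exists>p q r s. p < 4 \<and> q < 4 \<and> r < 4 \<and> s < 4 \<and> P p q \<and> P q r \<and> P r s"
proof -
  have "\<exists>a b. a < 2 \<and> b < 2 \<and> P a b"
  proof (cases "P 0 1")
    case True then show ?thesis by (intro exI[of _ 0] exI[of _ 1]) simp
  next
    case False then have "P 1 0" using tot[of 0 1] by simp
    then show ?thesis by (intro exI[of _ 1] exI[of _ 0]) simp
  qed
  then obtain a b where ab: "a < 2" "b < 2" "P a b" by blast
  have "\<exists>x y z. x < 3 \<and> y < 3 \<and> z < 3 \<and> P x y \<and> P y z"
  proof (cases "P 2 a")
    case True then show ?thesis using ab by force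
  next
    case False
    then have a2: "P a 2" using tot[of a 2] ab by auto
    show ?thesis
    proof (cases "P 2 b")
      case True then show ?thesis using ab a2 by force
    next
      case False
      then have "P b 2" using tot[of b 2] ab by auto
      then show ?thesis using ab by force
    qed
  qed
  then obtain x y z where xyz: "x < 3" "y < 3" "z < 3" "P x y" "P y z" by blast
  show ?thesis
  proof (cases "P 3 x")
    case True then show ?thesis using xyz by force
  next
    case False
    then have x3: "P x 3" using tot[of x 3] xyz by auto
    show ?thesis
    proof (cases "P 3 y")
      case True then show ?thesis using xyz x3 by force
    next
      case False
      then have y3: "P y 3" using tot[of y 3] xyz by auto
      show ?thesis
      proof (cases "P 3 z")
        case True then show ?thesis using xyz y3 by force
      next
        case False
        then have "P z 3" using tot[of z 3] xyz by auto
        then show ?thesis using xyz by force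
      qed
    qed
  qed
qed

lemma core_ordered:
  fixes U :: "nat set" and hp hq hr hs g :: "nat \<Rightarrow> int"
  assumes u0: "u0 \<in> U"
    and x: "\<forall>u\<in>U. (hp u - hq u) - (hp u0 - hq u0) \<ge> 0"
    and y: "\<forall>u\<in>U. (hq u - hr u) - (hq u0 - hr u0) \<ge> 0"
    and z: "\<forall>u\<in>U. (hr u - hs u) - (hr u0 - hs u0) \<ge> 0"
    and ps: "\<forall>u\<in>U. \<forall>w\<in>U. \<bar>(hp u - hs u) - (hp w - hs w)\<bar> \<le> 1"
    and e1: "\<exists>u\<in>U. (hp u - hq u) - (hp u0 - hq u0) \<noteq> 0"
    and e2: "\<exists>u\<in>U. (hq u - hr u) - (hq u0 - hr u0) \<noteq> 0"
    and e3: "\<exists>u\<in>U. (hr u - hs u) - (hr u0 - hs u0) \<noteq> 0"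
    and Wpq: "\<forall>u\<in>U. \<forall>w\<in>U. \<bar>(g u - hp u - hq u) - (g w - hp w - hq w)\<bar> \<le> 1"
    and Wrs: "\<forall>u\<in>U. \<forall>w\<in>U. \<bar>(g u - hr u - hs u) - (g w - hr w - hs w)\<bar> \<le> 1"
    and Wqr: "\<forall>u\<in>U. \<forall>w\<in>U. \<bar>(g u - hq u - hr u) - (g w - hq w - hr w)\<bar> \<le> 1"
    and Wps: "\<forall>u\<in>U. \<forall>w\<in>U. \<bar>(g u - hp u - hs u) - (g w - hp w - hs w)\<bar> \<le> 1"
  shows "(\<forall>u\<in>U. g u - hq u - hs u = g u0 - hq u0 - hs u0) \<or>
         (\<forall>u\<in>U. g u - hp u - hr u = g u0 - hp u0 - hr u0)"
proof -
  define X where "X u = (hp u - hq u) - (hp u0 - hq u0)" for u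
  define Y where "Y u = (hq u - hr u) - (hq u0 - hr u0)" for u
  define Z where "Z u = (hr u - hs u) - (hr u0 - hs u0)" for u
  define G where "G u = (g u - 2 * hs u) - (g u0 - 2 * hs u0)" for u
  have i_pq: "(g u - hp u - hq u) - (g w - hp w - hq w) = (G u - X u - 2*Y u - 2*Z u) - (G w - X w - 2*Y w - 2*Z w)" for u w
    unfolding X_def Y_def Z_def G_def by (simp add: algebra_simps)
  have i_rs: "(g u - hr u - hs u) - (g w - hr w - hs w) = (G u - Z u) - (G w - Z w)" for u w
    unfolding X_def Y_def Z_def G_def by (simp add: algebra_simps)
  have i_qr: "(g u - hq u - hr u) - (g w - hq w - hr w) = (G u - Y u - 2*Z u) - (G w - Y w - 2*Z w)" for u w
    unfolding X_def Y_def Z_def G_def by (simp add: algebra_simps)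
  have i_ps: "(g u - hp u - hs u) - (g w - hp w - hs w) = (G u - X u - Y u - Z u) - (G w - X w - Y w - Z w)" for u w
    unfolding X_def Y_def Z_def G_def by (simp add: algebra_simps)
  have i_qs: "(g u - hq u - hs u) - (g w - hq w - hs w) = (G u - Y u - Z u) - (G w - Y w - Z w)" for u w
    unfolding X_def Y_def Z_def G_def by (simp add: algebra_simps)
  have i_pr: "(g u - hp u - hr u) - (g w - hp w - hr w) = (G u - X u - Y u - 2*Z u) - (G w - X w - Y w - 2*Z w)" for u w
    unfolding X_def Y_def Z_def G_def by (simp add: algebra_simps)
  have i_xyz: "(hp u - hs u) - (hp w - hs w) = (X u + Y u + Z u) - (X w + Y w + Z w)" for u w
    unfolding X_def Y_def Z_def by (simp add: algebra_simps)
  have at0: "X u0 = 0" "Y u0 = 0" "Z u0 = 0" "G u0 = 0" unfolding X_def Y_def Z_def G_def by simp_all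
  have bits: "X u \<ge> 0 \<and> Y u \<ge> 0 \<and> Z u \<ge> 0 \<and> X u + Y u + Z u \<le> 1" if "u \<in> U" for u
  proof -
    have "\<bar>(X u + Y u + Z u) - (X u0 + Y u0 + Z u0)\<bar> \<le> 1" using ps that u0 i_xyz by metis
    then show ?thesis using x y z that at0 unfolding X_def[symmetric] Y_def[symmetric] Z_def[symmetric] by auto
  qed
  obtain z1 where z1: "z1 \<in> U" "X z1 = 1" "Y z1 = 0" "Z z1 = 0"
  proof -
    obtain u where "u \<in> U" "X u \<noteq> 0" using e1 unfolding X_def by blast
    with bits[of u] show ?thesis using that by force
  qed
  obtain z2 where z2: "z2 \<in> U" "X z2 = 0" "Y z2 = 1" "Z z2 = 0"
  proof -
    obtain u where "u \<in> U" "Y u \<noteq> 0" using e2 unfolding Y_def by blast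
    with bits[of u] show ?thesis using that by force
  qed
  obtain z3 where z3: "z3 \<in> U" "X z3 = 0" "Y z3 = 0" "Z z3 = 1"
  proof -
    obtain u where "u \<in> U" "Z u \<noteq> 0" using e3 unfolding Z_def by blast
    with bits[of u] show ?thesis using that by force
  qed
  have main: "(G z1 = 0 \<and> G u - Y u - Z u = 0) \<or> (G z1 = 1 \<and> G u - X u - Y u - 2*Z u = 0)"
    if uU: "u \<in> U" for u
  proof (rule arith_core)
    show "X u \<ge> 0" "Y u \<ge> 0" "Z u \<ge> 0" "X u + Y u + Z u \<le> 1" using bits[OF uU] by auto
    show "\<bar>(G u - X u - 2*Y u - 2*Z u) - (G z2 - 2)\<bar> \<le> 1" using Wpq uU z2 i_pq[of u z2] by (metis diff_zero mult_zero_right mult_1_right)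
    show "\<bar>(G u - Z u) - G z2\<bar> \<le> 1" using Wrs uU z2 i_rs[of u z2] by (metis diff_zero)
    show "\<bar>G z2 - 2\<bar> \<le> 1" using Wpq u0 z2 i_pq[of z2 u0] at0 by (metis diff_zero mult_zero_right mult_1_right)
    show "\<bar>G z2\<bar> \<le> 1" using Wrs u0 z2 i_rs[of z2 u0] at0 by (metis diff_zero)
    show "\<bar>G u - X u - 2*Y u - 2*Z u\<bar> \<le> 1" using Wpq uU u0 i_pq[of u u0] at0 by (metis diff_zero mult_zero_right)
    show "\<bar>G u - Z u\<bar> \<le> 1" using Wrs uU u0 i_rs[of u u0] at0 by (metis diff_zero)
    show "\<bar>(G u - Y u - 2*Z u) - (G z3 - 2)\<bar> \<le> 1" using Wqr uU z3 i_qr[of u z3] by (metis diff_zero mult_1_right)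
    show "\<bar>(G u - X u - Y u - Z u) - (G z3 - 1)\<bar> \<le> 1" using Wps uU z3 i_ps[of u z3] by (metis diff_zero)
    show "\<bar>G z1 - (G z3 - 2)\<bar> \<le> 1" using Wqr z1 z3 i_qr[of z1 z3] by (metis diff_zero mult_zero_right mult_1_right)
    show "\<bar>(G z1 - 1) - (G z3 - 1)\<bar> \<le> 1" using Wps z1 z3 i_ps[of z1 z3] by (metis diff_zero)
    show "\<bar>(G u - Y u - 2*Z u) - G z1\<bar> \<le> 1" using Wqr uU z1 i_qr[of u z1] by (metis diff_zero mult_zero_right)
    show "\<bar>(G u - X u - Y u - Z u) - (G z1 - 1)\<bar> \<le> 1" using Wps uU z1 i_ps[of u z1] by (metis diff_zero)
    show "\<bar>G z1 - 1\<bar> \<le> 1" using Wpq u0 z1 i_pq[of z1 u0] at0 by (metis diff_zero mult_zero_right)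
    show "\<bar>G z1\<bar> \<le> 1" using Wrs u0 z1 i_rs[of z1 u0] at0 by (metis diff_zero)
  qed
  show ?thesis
  proof (cases "G z1 = 0")
    case True
    have "\<forall>u\<in>U. g u - hq u - hs u = g u0 - hq u0 - hs u0"
    proof
      fix u assume "u \<in> U"
      then have "G u - Y u - Z u = 0" using main True by auto
      then show "g u - hq u - hs u = g u0 - hq u0 - hs u0" using i_qs[of u u0] at0 by simp
    qed
    then show ?thesis by blast
  next
    case False
    have "\<forall>u\<in>U. g u - hp u - hr u = g u0 - hp u0 - hr u0"
    proof
      fix u assume "u \<in> U"
      then have "G u - X u - Y u - 2*Z u = 0" using main False by auto
      then show "g u - hp u - hr u = g u0 - hp u0 - hr u0" using i_pr[of u u0] at0 by simp
    qed
    then show ?thesis by blast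
  qed
qed

lemma core:
  fixes U :: "nat set" and h :: "nat \<Rightarrow> nat \<Rightarrow> int" and g :: "nat \<Rightarrow> int"
  assumes u0: "u0 \<in> U"
    and A1: "\<And>i j u w. i < 4 \<Longrightarrow> j < 4 \<Longrightarrow> u \<in> U \<Longrightarrow> w \<in> U \<Longrightarrow> \<bar>(h i u - h j u) - (h i w - h j w)\<bar> \<le> 1"
    and A3: "\<And>i j. i < 4 \<Longrightarrow> j < 4 \<Longrightarrow> i \<noteq> j \<Longrightarrow> \<exists>u\<in>U. \<exists>w\<in>U. h i u - h j u \<noteq> h i w - h j w"
    and A2: "\<And>a b u w. a < 4 \<Longrightarrow> b < 4 \<Longrightarrow> a \<noteq> b \<Longrightarrow> u \<in> U \<Longrightarrow> w \<in> U \<Longrightarrow>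
        \<bar>(g u - h a u - h b u) - (g w - h a w - h b w)\<bar> \<le> 1"
  shows "\<exists>a<4. \<exists>b<4. a \<noteq> b \<and> (\<forall>u\<in>U. \<forall>w\<in>U. g u - h a u - h b u = g w - h a w - h b w)"
proof -
  define \<delta> where "\<delta> i j u = (h i u - h j u) - (h i u0 - h j u0)" for i j u
  define pos where "pos i j \<longleftrightarrow> (\<exists>u\<in>U. \<delta> i j u > 0)" for i j
  have nonneg: "\<forall>u\<in>U. \<delta> i j u \<ge> 0" if H: "i < 4" "j < 4" "pos i j" for i j
  proof (rule ccontr)
    assume "\<not> (\<forall>u\<in>U. \<delta> i j u \<ge> 0)"
    then obtain u where u: "u \<in> U" "\<delta> i j u < 0" by force
    obtain w where w: "w \<in> U" "\<delta> i j w > 0" using H(3) unfolding pos_def by blast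
    have "\<bar>(h i u - h j u) - (h i w - h j w)\<bar> \<le> 1" using A1 H u w by blast
    moreover have "(h i u - h j u) - (h i w - h j w) = \<delta> i j u - \<delta> i j w" unfolding \<delta>_def by simp
    ultimately show False using u w by simp
  qed
  have tot: "pos i j \<or> pos j i" if H: "i < 4" "j < 4" "i \<noteq> j" for i j
  proof -
    obtain u w where uw: "u \<in> U" "w \<in> U" "h i u - h j u \<noteq> h i w - h j w" using A3[OF H] by blast
    then have "\<delta> i j u \<noteq> 0 \<or> \<delta> i j w \<noteq> 0" unfolding \<delta>_def by auto
    then obtain t where t: "t \<in> U" "\<delta> i j t \<noteq> 0" using uw by blast
    have "\<delta> j i t = - \<delta> i j t" unfolding \<delta>_def by simp
    then show ?thesis unfolding pos_def using t by (cases "\<delta> i j t > 0") force+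
  qed
  have trans: "pos i k" if H: "i < 4" "j < 4" "k < 4" "pos i j" "pos j k" for i j k
  proof -
    obtain u where u: "u \<in> U" "\<delta> i j u > 0" using H(4) unfolding pos_def by blast
    have "\<delta> j k u \<ge> 0" using nonneg[OF H(2,3,5)] u by blast
    moreover have "\<delta> i k u = \<delta> i j u + \<delta> j k u" unfolding \<delta>_def by simp
    ultimately show ?thesis using u unfolding pos_def by force
  qed
  have irr: "\<not> pos i i" for i unfolding pos_def \<delta>_def by simp
  obtain p q r s where pqrs: "p < 4" "q < 4" "r < 4" "s < 4" "pos p q" "pos q r" "pos r s"
    using tourn4[of pos] tot by blast
  have "pos p r" "pos q s" using trans pqrs by blast+
  then have "pos p s" using trans pqrs by blast
  have dist: "p \<noteq> q" "q \<noteq> r" "r \<noteq> s" "p \<noteq> r" "q \<noteq> s" "p \<noteq> s"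
    using irr pqrs \<open>pos p r\<close> \<open>pos q s\<close> \<open>pos p s\<close> by metis+
  have ex: "\<exists>u\<in>U. \<delta> i j u \<noteq> 0" if "pos i j" for i j using that unfolding pos_def by force
  have "(\<forall>u\<in>U. g u - h q u - h s u = g u0 - h q u0 - h s u0) \<or>
         (\<forall>u\<in>U. g u - h p u - h r u = g u0 - h p u0 - h r u0)"
  proof (rule core_ordered[OF u0])
    show "\<forall>u\<in>U. (h p u - h q u) - (h p u0 - h q u0) \<ge> 0"
      using nonneg[OF pqrs(1,2,5)] unfolding \<delta>_def .
    show "\<forall>u\<in>U. (h q u - h r u) - (h q u0 - h r u0) \<ge> 0"
      using nonneg[OF pqrs(2,3,6)] unfolding \<delta>_def .
    show "\<forall>u\<in>U. (h r u - h s u) - (h r u0 - h s u0) \<ge> 0"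
      using nonneg[OF pqrs(3,4,7)] unfolding \<delta>_def .
    show "\<forall>u\<in>U. \<forall>w\<in>U. \<bar>(h p u - h s u) - (h p w - h s w)\<bar> \<le> 1" using A1 pqrs by blast
    show "\<exists>u\<in>U. (h p u - h q u) - (h p u0 - h q u0) \<noteq> 0" using ex[OF pqrs(5)] unfolding \<delta>_def .
    show "\<exists>u\<in>U. (h q u - h r u) - (h q u0 - h r u0) \<noteq> 0" using ex[OF pqrs(6)] unfolding \<delta>_def .
    show "\<exists>u\<in>U. (h r u - h s u) - (h r u0 - h s u0) \<noteq> 0" using ex[OF pqrs(7)] unfolding \<delta>_def .
    show "\<forall>u\<in>U. \<forall>w\<in>U. \<bar>(g u - h p u - h q u) - (g w - h p w - h q w)\<bar> \<le> 1" using A2 pqrs dist by blast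
    show "\<forall>u\<in>U. \<forall>w\<in>U. \<bar>(g u - h r u - h s u) - (g w - h r w - h s w)\<bar> \<le> 1" using A2 pqrs dist by blast
    show "\<forall>u\<in>U. \<forall>w\<in>U. \<bar>(g u - h q u - h r u) - (g w - h q w - h r w)\<bar> \<le> 1" using A2 pqrs dist by blast
    show "\<forall>u\<in>U. \<forall>w\<in>U. \<bar>(g u - h p u - h s u) - (g w - h p w - h s w)\<bar> \<le> 1" using A2 pqrs dist by blast
  qed
  then show ?thesis
  proof
    assume H: "\<forall>u\<in>U. g u - h q u - h s u = g u0 - h q u0 - h s u0"
    have "\<forall>u\<in>U. \<forall>w\<in>U. g u - h q u - h s u = g w - h q w - h s w" using H by metis
    then show ?thesis using pqrs dist by blast
  next
    assume H: "\<forall>u\<in>U. g u - h p u - h r u = g u0 - h p u0 - h r u0"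
    have "\<forall>u\<in>U. \<forall>w\<in>U. g u - h p u - h r u = g w - h p w - h r w" using H by metis
    then show ?thesis using pqrs dist by blast
  qed
qed



lemma prod_nonpos_int:
  fixes a b :: int
  assumes "a + b = -1 \<or> a + b = 0 \<or> a + b = 1"
  shows "a * b \<le> 0"
proof (cases "a \<ge> 1")
  case True
  then have "b \<le> 0" using assms by auto
  then show ?thesis using True by (simp add: mult_nonneg_nonpos)
next
  case False
  show ?thesis
  proof (cases "a \<le> -1")
    case True
    then have "b \<ge> 0" using assms by auto
    then show ?thesis using True by (simp add: mult_nonpos_nonneg)
  next
    case False
    then have "a = 0" using \<open>\<not> a \<ge> 1\<close> by auto
    then show ?thesis by simp
  qed
qed

lemma sub_zero:
  assumes wL: "w \<in> orth_lattice r \<sigma>" and k: "w k = 0"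
    and wx: "\<forall>p. w p = 0 \<or> w p = x p"
    and vals: "\<forall>p. x p = -1 \<or> x p = 0 \<or> x p = 1"
    and spos: "\<forall>p\<in>{1..r}. \<sigma> p > 0"
    and bnd: "\<forall>p0\<in>{1..r}. x p0 = -1 \<longrightarrow> (\<Sum>p\<in>{p\<in>{1..r}. p \<noteq> k \<and> x p = 1}. \<sigma> p) < \<sigma> p0"
  shows "w = (\<lambda>_. 0)"
proof -
  have wz: "w \<in> zvec r" and pw: "pairing r w \<sigma> = 0" using wL unfolding orth_lattice_def by auto
  define Pp where "Pp = {p\<in>{1..r}. p \<noteq> k \<and> x p = 1}"
  have finPp: "finite Pp" unfolding Pp_def by simp
  have PpS: "Pp \<subseteq> {1..r}" unfolding Pp_def by auto
  show ?thesis
  proof (cases "\<exists>p0\<in>{1..r}. w p0 = -1")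
    case True
    then obtain p0 where p0: "p0 \<in> {1..r}" "w p0 = -1" by blast
    then have xp0: "x p0 = -1" using wx by (metis zero_neq_neg_one)
    have "pairing r w \<sigma> = (\<Sum>p\<in>{1..r}. w p * \<sigma> p)" unfolding pairing_def ..
    also have "\<dots> \<le> (\<Sum>p\<in>{1..r}. (if p \<in> Pp then \<sigma> p else 0) - (if p = p0 then \<sigma> p else 0))"
    proof (rule sum_mono)
      fix p assume pr: "p \<in> {1..r}"
      show "w p * \<sigma> p \<le> (if p \<in> Pp then \<sigma> p else 0) - (if p = p0 then \<sigma> p else 0)"
      proof (cases "p = p0")
        case True
        then have "p \<notin> Pp" using xp0 unfolding Pp_def by auto
        then show ?thesis using True p0 by simp
      next
        case False
        have sp: "\<sigma> p > 0" using spos pr by blast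
        consider "w p = 1" | "w p = 0" | "w p = -1" using wx vals by metis
        then show ?thesis
        proof cases
          case 1
          then have "x p = 1" "p \<noteq> k" using wx k by (metis zero_neq_one)+
          then have "p \<in> Pp" using pr unfolding Pp_def by simp
          then show ?thesis using 1 False by simp
        next
          case 2 then show ?thesis using False sp by simp
        next
          case 3 then show ?thesis using False sp by simp
        qed
      qed
    qed
    also have "\<dots> = (\<Sum>p\<in>{1..r}. if p \<in> Pp then \<sigma> p else 0) - (\<Sum>p\<in>{1..r}. if p = p0 then \<sigma> p else 0)"
      by (simp add: sum_subtractf)
    also have "(\<Sum>p\<in>{1..r}. if p \<in> Pp then \<sigma> p else 0) = sum \<sigma> Pp"
      using PpS by (simp add: sum.inter_restrict[symmetric] Int_absorb1)
    also have "(\<Sum>p\<in>{1..r}. if p = p0 then \<sigma> p else 0) = \<sigma> p0"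
      using p0 by (simp add: sum.delta)
    finally have "pairing r w \<sigma> \<le> sum \<sigma> Pp - \<sigma> p0" .
    moreover have "sum \<sigma> Pp < \<sigma> p0" using bnd p0 xp0 unfolding Pp_def by blast
    ultimately show ?thesis using pw by simp
  next
    case False
    have nn: "\<forall>p\<in>{1..r}. 0 \<le> w p * \<sigma> p"
    proof
      fix p assume pr: "p \<in> {1..r}"
      have "w p \<noteq> -1" using False pr by blast
      then have "w p \<ge> 0" using wx vals by (metis add.inverse_inverse le_less neg_0_less_iff_less not_one_less_zero zero_le_one)
      moreover have "\<sigma> p > 0" using spos pr by blast
      ultimately show "0 \<le> w p * \<sigma> p" by simp
    qed
    have "\<forall>p\<in>{1..r}. w p * \<sigma> p = 0"
      using pw nn unfolding pairing_def by (subst (asm) sum_nonneg_eq_0_iff) auto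
    then have a: "\<forall>p\<in>{1..r}. w p = 0"
    proof (intro ballI)
      fix p assume "\<forall>p\<in>{1..r}. w p * \<sigma> p = 0" "p \<in> {1..r}"
      then have "w p * \<sigma> p = 0" "\<sigma> p > 0" using spos by auto
      then show "w p = 0" by simp
    qed
    show ?thesis
    proof
      fix p show "w p = 0"
      proof (cases "p \<in> {1..r}")
        case True then show ?thesis using a by blast
      next
        case False then show ?thesis using wz unfolding zvec_def by blast
      qed
    qed
  qed
qed

lemma irr_crit:
  assumes xL: "x \<in> orth_lattice r \<sigma>" and k: "k \<in> {1..r}" "x k = 1"
    and vals: "\<forall>p. x p = -1 \<or> x p = 0 \<or> x p = 1"
    and spos: "\<forall>p\<in>{1..r}. \<sigma> p > 0"
    and bnd: "\<forall>p0\<in>{1..r}. x p0 = -1 \<longrightarrow> (\<Sum>p\<in>{p\<in>{1..r}. p \<noteq> k \<and> x p = 1}. \<sigma> p) < \<sigma> p0"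
  shows "irr r \<sigma> x"
  unfolding irr_def
proof (intro conjI allI impI)
  show "x \<in> orth_lattice r \<sigma>" by (rule xL)
  show "x \<noteq> (\<lambda>_. 0)" using k by (metis zero_neq_one)
  fix y z
  assume yL: "y \<in> orth_lattice r \<sigma>" and zL: "z \<in> orth_lattice r \<sigma>" and xyz: "x = (\<lambda>t. y t + z t)"
    and yne: "y \<noteq> (\<lambda>_. 0)" and zne: "z \<noteq> (\<lambda>_. 0)"
  show "pairing r y z < 0"
  proof (rule ccontr)
    assume "\<not> pairing r y z < 0"
    then have pge: "pairing r y z \<ge> 0" by simp
    have yz: "\<And>p. y p + z p = x p" using xyz by metis
    have np: "\<forall>p\<in>{1..r}. y p * z p \<le> 0"
      using prod_nonpos_int vals yz by metis
    have z0: "\<forall>p\<in>{1..r}. y p * z p = 0"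
    proof -
      have "(\<Sum>p\<in>{1..r}. y p * z p) \<le> 0" using np by (intro sum_nonpos) blast
      then have "(\<Sum>p\<in>{1..r}. y p * z p) = 0" using pge unfolding pairing_def by simp
      then have "(\<Sum>p\<in>{1..r}. - (y p * z p)) = 0"
        by (simp add: sum_negf)
      then show ?thesis using np by (subst (asm) sum_nonneg_eq_0_iff) auto
    qed
    have yzv: "y \<in> zvec r" "z \<in> zvec r" using yL zL unfolding orth_lattice_def by auto
    have ysub: "\<forall>p. y p = 0 \<or> y p = x p"
    proof
      fix p show "y p = 0 \<or> y p = x p"
      proof (cases "p \<in> {1..r}")
        case True then show ?thesis using z0 yz by (metis add.right_neutral mult_eq_0_iff)
      next
        case False then show ?thesis using yzv unfolding zvec_def by blast
      qed
    qed
    have zsub: "\<forall>p. z p = 0 \<or> z p = x p"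
    proof
      fix p show "z p = 0 \<or> z p = x p"
      proof (cases "p \<in> {1..r}")
        case True then show ?thesis using z0 yz by (metis add.left_neutral mult_eq_0_iff)
      next
        case False then show ?thesis using yzv unfolding zvec_def by blast
      qed
    qed
    have "y k = 0 \<or> z k = 0" using z0 k by simp
    then show False
    proof
      assume "y k = 0"
      then have "y = (\<lambda>_. 0)" using sub_zero[OF yL _ ysub vals spos bnd] by blast
      with yne show False by simp
    next
      assume "z k = 0"
      then have "z = (\<lambda>_. 0)" using sub_zero[OF zL _ zsub vals spos bnd] by blast
      with zne show False by simp
    qed
  qed
qed

lemma cm_mono:
  assumes cm: "changemaker r \<sigma>" and "1 \<le> i" "i \<le> j" "j \<le> r"
  shows "\<sigma> i \<le> \<sigma> j"
  using assms(3,4)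
proof (induction j rule: dec_induct)
  case base then show ?case by simp
next
  case (step n)
  then have "Suc n \<in> {2..r}" using assms(2) by auto
  then have "\<sigma> (Suc n - 1) \<le> \<sigma> (Suc n)" using cm unfolding changemaker_def by blast
  then show ?case using step by simp
qed

lemma cm_pos:
  assumes cm: "changemaker r \<sigma>" and "p \<in> {1..r}"
  shows "\<sigma> p \<ge> 1"
proof -
  have "\<sigma> 1 = 1" using cm unfolding changemaker_def by blast
  moreover have "\<sigma> 1 \<le> \<sigma> p" using cm_mono[OF cm, of 1 p] assms(2) by auto
  ultimately show ?thesis by simp
qed

lemma cm_bound:
  assumes cm: "changemaker r \<sigma>" and "j \<in> {1..r}"
  shows "\<sigma> j \<le> 1 + (\<Sum>i\<in>{1..<j}. \<sigma> i)"
proof (cases "j = 1")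
  case True
  then show ?thesis using cm unfolding changemaker_def by simp
next
  case False
  then have "j \<in> {2..r}" using assms(2) by auto
  then show ?thesis using cm unfolding changemaker_def by blast
qed

lemma subset_sum:
  assumes cm: "changemaker r \<sigma>"
  shows "j \<le> r \<Longrightarrow> 0 \<le> N \<Longrightarrow> N \<le> (\<Sum>i\<in>{1..<j}. \<sigma> i) \<Longrightarrow> \<exists>S\<subseteq>{1..<j}. sum \<sigma> S = N"
proof (induction j arbitrary: N)
  case 0
  then have "N = 0" by simp
  then show ?case by (intro exI[of _ "{}"]) simp
next
  case (Suc j)
  show ?case
  proof (cases "j = 0")
    case True
    then have "N = 0" using Suc.prems by simp
    then show ?thesis by (intro exI[of _ "{}"]) simp
  next
    case False
    have split: "{1..<Suc j} = insert j {1..<j}" using False by auto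
    have sj: "(\<Sum>i\<in>{1..<Suc j}. \<sigma> i) = \<sigma> j + (\<Sum>i\<in>{1..<j}. \<sigma> i)"
      unfolding split by simp
    show ?thesis
    proof (cases "N \<le> (\<Sum>i\<in>{1..<j}. \<sigma> i)")
      case True
      then obtain S where "S \<subseteq> {1..<j}" "sum \<sigma> S = N" using Suc.IH[of N] Suc.prems by auto
      then show ?thesis by (intro exI[of _ S]) auto
    next
      case nle: False
      have "\<sigma> j \<le> 1 + (\<Sum>i\<in>{1..<j}. \<sigma> i)" using cm_bound[OF cm, of j] False Suc.prems by auto
      then have "0 \<le> N - \<sigma> j" "N - \<sigma> j \<le> (\<Sum>i\<in>{1..<j}. \<sigma> i)" using nle Suc.prems sj by auto
      then obtain S where S: "S \<subseteq> {1..<j}" "sum \<sigma> S = N - \<sigma> j" using Suc.IH[of "N - \<sigma> j"] Suc.prems by auto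
      have "j \<notin> S" using S by auto
      then have "sum \<sigma> (insert j S) = N" using S by (simp add: finite_subset)
      moreover have "insert j S \<subseteq> {1..<Suc j}" using S False by auto
      ultimately show ?thesis by blast
    qed
  qed
qed

lemma sum_ind:
  fixes r :: nat and \<sigma> :: "nat \<Rightarrow> int"
  assumes "A \<subseteq> {1..r}"
  shows "(\<Sum>p\<in>{1..r}. (if p \<in> A then 1 else 0) * (\<sigma> p :: int)) = sum \<sigma> A"
proof -
  have "(\<Sum>p\<in>{1..r}. (if p \<in> A then 1 else 0) * \<sigma> p) = (\<Sum>p\<in>{1..r}. if p \<in> A then \<sigma> p else 0)"
    by (intro sum.cong) auto
  also have "\<dots> = sum \<sigma> ({1..r} \<inter> A)" by (rule sum.inter_restrict[symmetric]) simp
  also have "{1..r} \<inter> A = A" using assms by auto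
  finally show ?thesis .
qed

lemma sum_pt:
  fixes r :: nat and \<sigma> :: "nat \<Rightarrow> int"
  assumes "k \<in> {1..r}"
  shows "(\<Sum>p\<in>{1..r}. (if p = k then 1 else 0) * (\<sigma> p :: int)) = \<sigma> k"
proof -
  have "(\<Sum>p\<in>{1..r}. (if p = k then 1 else 0) * \<sigma> p) = (\<Sum>p\<in>{1..r}. if p = k then \<sigma> p else 0)"
    by (intro sum.cong) auto
  also have "\<dots> = (if k \<in> {1..r} then \<sigma> k else 0)" by (rule sum.delta) simp
  also have "\<dots> = \<sigma> k" using assms by simp
  finally show ?thesis .
qed

lemma vec_irr:
  assumes spos: "\<forall>p\<in>{1..r}. \<sigma> p > 0"
    and k: "k \<in> {1..r}" and i1: "i1 \<in> {1..r}" and i2: "i2 \<in> {1..r}"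
    and d: "i1 \<noteq> i2" "k \<noteq> i1" "k \<noteq> i2"
    and N: "N \<subseteq> {1..r}" and P: "P \<subseteq> {1..r}" and NP: "N \<inter> P = {}"
    and nin: "k \<notin> N" "k \<notin> P" "i1 \<notin> N" "i1 \<notin> P" "i2 \<notin> N" "i2 \<notin> P"
    and bal: "\<sigma> k - \<sigma> i1 - \<sigma> i2 - sum \<sigma> N + sum \<sigma> P = 0"
    and b1: "sum \<sigma> P < \<sigma> i1" and b2: "sum \<sigma> P < \<sigma> i2" and bN: "\<forall>p\<in>N. sum \<sigma> P < \<sigma> p"
  shows "irr r \<sigma> (\<lambda>p. (if p = k then 1 else 0) - (if p = i1 then 1 else 0) - (if p = i2 then 1 else 0)
            - (if p \<in> N then 1 else 0) + (if p \<in> P then 1 else 0))"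
    (is "irr r \<sigma> ?x")
proof (rule irr_crit[where k = k])
  have z: "?x \<in> zvec r" unfolding zvec_def using k i1 i2 N P by auto
  have "pairing r ?x \<sigma> = (\<Sum>p\<in>{1..r}. (if p = k then 1 else 0) * \<sigma> p - (if p = i1 then 1 else 0) * \<sigma> p
      - (if p = i2 then 1 else 0) * \<sigma> p - (if p \<in> N then 1 else 0) * \<sigma> p + (if p \<in> P then 1 else 0) * \<sigma> p)"
    unfolding pairing_def by (intro sum.cong) (simp_all add: algebra_simps)
  also have "\<dots> = \<sigma> k - \<sigma> i1 - \<sigma> i2 - sum \<sigma> N + sum \<sigma> P"
    by (simp only: sum.distrib sum_subtractf sum_ind[OF N] sum_ind[OF P] sum_pt[OF k] sum_pt[OF i1] sum_pt[OF i2])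
  finally have "pairing r ?x \<sigma> = 0" using bal by simp
  then show "?x \<in> orth_lattice r \<sigma>" using z unfolding orth_lattice_def by simp
  show "k \<in> {1..r}" by (rule k)
  show "?x k = 1" using d nin by simp
  show "\<forall>p. ?x p = -1 \<or> ?x p = 0 \<or> ?x p = 1"
  proof
    fix p
    show "?x p = -1 \<or> ?x p = 0 \<or> ?x p = 1"
    proof (cases "p = k")
      case True then show ?thesis using d nin by simp
    next
      case pk: False
      show ?thesis
      proof (cases "p = i1")
        case True then show ?thesis using d nin by simp
      next
        case p1: False
        show ?thesis
        proof (cases "p = i2")
          case True then show ?thesis using d nin pk p1 by simp
        next
          case p2: False
          show ?thesis
          proof (cases "p \<in> N")
            case True
            then have "p \<notin> P" using NP by blast
            then show ?thesis using True pk p1 p2 by simp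
          next
            case False then show ?thesis using pk p1 p2 by simp
          qed
        qed
      qed
    qed
  qed
  show "\<forall>p\<in>{1..r}. \<sigma> p > 0" by (rule spos)
  have setP: "{p\<in>{1..r}. p \<noteq> k \<and> ?x p = 1} = P"
  proof (intro set_eqI iffI)
    fix p assume "p \<in> {p\<in>{1..r}. p \<noteq> k \<and> ?x p = 1}"
    then have "p \<noteq> k" "?x p = 1" by blast+
    show "p \<in> P"
    proof (rule ccontr)
      assume nP: "p \<notin> P"
      have "?x p \<le> 0" using nP \<open>p \<noteq> k\<close> by simp
      with \<open>?x p = 1\<close> show False by simp
    qed
  next
    fix p assume "p \<in> P"
    then show "p \<in> {p\<in>{1..r}. p \<noteq> k \<and> ?x p = 1}" using P nin NP by auto
  qed
  show "\<forall>p0\<in>{1..r}. ?x p0 = -1 \<longrightarrow> (\<Sum>p\<in>{p\<in>{1..r}. p \<noteq> k \<and> ?x p = 1}. \<sigma> p) < \<sigma> p0"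
  proof (intro ballI impI)
    fix p0 assume "p0 \<in> {1..r}" "?x p0 = -1"
    have "p0 = i1 \<or> p0 = i2 \<or> p0 \<in> N"
    proof (rule ccontr)
      assume "\<not> (p0 = i1 \<or> p0 = i2 \<or> p0 \<in> N)"
      then have "?x p0 \<ge> 0" by simp
      with \<open>?x p0 = -1\<close> show False by simp
    qed
    then show "(\<Sum>p\<in>{p\<in>{1..r}. p \<noteq> k \<and> ?x p = 1}. \<sigma> p) < \<sigma> p0" unfolding setP using b1 b2 bN by auto
  qed
qed

lemma d_irr:
  assumes spos: "\<forall>p\<in>{1..r}. \<sigma> p > 0"
    and i: "i \<in> {1..r}" and j: "j \<in> {1..r}" and d: "i \<noteq> j" and eq: "\<sigma> i = \<sigma> j"
  shows "irr r \<sigma> (\<lambda>p. (if p = i then 1 else 0) - (if p = j then 1 else 0))"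
    (is "irr r \<sigma> ?x")
proof (rule irr_crit[where k = i])
  have z: "?x \<in> zvec r" unfolding zvec_def using i j by auto
  have "pairing r ?x \<sigma> = (\<Sum>p\<in>{1..r}. (if p = i then 1 else 0) * \<sigma> p - (if p = j then 1 else 0) * \<sigma> p)"
    unfolding pairing_def by (intro sum.cong) (simp_all add: algebra_simps)
  also have "\<dots> = \<sigma> i - \<sigma> j" by (simp only: sum_subtractf sum_pt[OF i] sum_pt[OF j])
  finally have "pairing r ?x \<sigma> = 0" using eq by simp
  then show "?x \<in> orth_lattice r \<sigma>" using z unfolding orth_lattice_def by simp
  show "i \<in> {1..r}" by (rule i)
  show "?x i = 1" using d by simp
  show "\<forall>p. ?x p = -1 \<or> ?x p = 0 \<or> ?x p = 1" by auto
  show "\<forall>p\<in>{1..r}. \<sigma> p > 0" by (rule spos)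
  have "{p\<in>{1..r}. p \<noteq> i \<and> ?x p = 1} = {}" by auto
  then show "\<forall>p0\<in>{1..r}. ?x p0 = -1 \<longrightarrow> (\<Sum>p\<in>{p\<in>{1..r}. p \<noteq> i \<and> ?x p = 1}. \<sigma> p) < \<sigma> p0"
    using spos by simp
qed



lemma w0_exists:
  fixes \<sigma> :: "nat \<Rightarrow> int"
  assumes cm: "changemaker r \<sigma>" and b1: "b > 1" and l4: "l \<ge> 4" and blr: "b + l - 1 \<le> r"
    and blk: "\<forall>i<l. \<sigma> (b + i) = s"
    and kr: "k \<in> {1..r}" and kb: "k > b + l - 1" and st: "s < \<sigma> k" and tl: "\<sigma> k < (int l - 1) * s"
  shows "\<exists>w0. \<forall>a<4. \<forall>c<4. a \<noteq> c \<longrightarrow>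
           irr r \<sigma> (\<lambda>p. w0 p - (if p = b + a then 1 else 0) - (if p = b + c then 1 else 0))"
proof -
  have spos: "\<forall>p\<in>{1..r}. \<sigma> p > 0" using cm_pos[OF cm] by force
  have "0 < l" using l4 by simp
  then have sb: "s = \<sigma> b" using blk by (metis add.right_neutral)
  have brange: "b \<in> {1..r}" using b1 blr l4 by auto
  have s1: "s \<ge> 1" using spos brange sb by force
  have sumb: "s - 1 \<le> (\<Sum>i\<in>{1..<b}. \<sigma> i)" using cm_bound[OF cm brange] sb by simp
  define t where "t = \<sigma> k"
  define q where "q = t div s"
  define \<rho> where "\<rho> = t mod s"
  have tq: "t = q * s + \<rho>" unfolding q_def \<rho>_def by simp
  have \<rho>b: "0 \<le> \<rho>" "\<rho> < s" unfolding \<rho>_def using s1 by auto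
  have q1: "q \<ge> 1"
  proof (rule ccontr)
    assume "\<not> q \<ge> 1"
    then have "q \<le> 0" by simp
    then have "q * s \<le> 0" using s1 by (simp add: mult_nonpos_nonneg)
    then show False using tq \<rho>b st unfolding t_def by linarith
  qed
  have ql: "q \<le> int l - 2"
  proof (rule ccontr)
    assume "\<not> q \<le> int l - 2"
    then have "q \<ge> int l - 1" by simp
    then have "q * s \<ge> (int l - 1) * s" using s1 by (simp add: mult_right_mono)
    then show False using tq \<rho>b tl unfolding t_def by linarith
  qed
  have ib: "\<And>a. a < 4 \<Longrightarrow> b + a \<in> {1..r} \<and> \<sigma> (b + a) = s" using blk l4 blr b1 by auto
  show ?thesis
  proof (cases "q \<ge> 2")
    case True
    obtain R where R: "R \<subseteq> {1..<b}" "sum \<sigma> R = \<rho>"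
      using subset_sum[OF cm, of b \<rho>] \<rho>b sumb brange by auto
    define qn where "qn = nat q"
    define Q where "Q = {b + 4..<b + qn + 2}"
    have qn2: "qn \<ge> 2" "int qn = q" unfolding qn_def using True by auto
    have qnl: "qn + 2 \<le> l" using ql qn2 by linarith
    have Qs: "\<forall>p\<in>Q. \<sigma> p = s"
    proof
      fix p assume "p \<in> Q"
      then have "p - b < l" "p = b + (p - b)" unfolding Q_def using qnl by auto
      then show "\<sigma> p = s" using blk by metis
    qed
    have cardQ: "card Q = qn - 2" unfolding Q_def by simp
    have sumQ: "sum \<sigma> Q = (q - 2) * s"
    proof -
      have "sum \<sigma> Q = (\<Sum>p\<in>Q. s)" using Qs by simp
      also have "\<dots> = int (qn - 2) * s" using cardQ by simp
      also have "int (qn - 2) = q - 2" using qn2 by simp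
      finally show ?thesis .
    qed
    define N where "N = Q \<union> R"
    define w0 :: "nat \<Rightarrow> int" where "w0 p = (if p = k then 1 else 0) - (if p \<in> N then 1 else 0)" for p
    have QR: "Q \<inter> R = {}" unfolding Q_def using R by auto
    have sumN: "sum \<sigma> N = (q - 2) * s + \<rho>"
      unfolding N_def using QR R sumQ by (simp add: sum.union_disjoint finite_subset Q_def)
    have Rr: "R \<subseteq> {1..r}" using R(1) brange by auto
    have Nr: "N \<subseteq> {1..r}" unfolding N_def Q_def using Rr qnl blr b1 by auto
    have kN: "k \<notin> N" unfolding N_def Q_def using R kb qnl by auto
    have aN: "\<And>a. a < 4 \<Longrightarrow> b + a \<notin> N" unfolding N_def Q_def using R by auto
    have Npos: "\<forall>p\<in>N. sum \<sigma> {} < \<sigma> p" using Nr spos by auto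
    show ?thesis
    proof (intro exI allI impI)
      fix a c :: nat assume ac: "a < 4" "c < 4" "a \<noteq> c"
      have eq: "(\<lambda>p. w0 p - (if p = b + a then 1 else 0) - (if p = b + c then 1 else 0)) =
        (\<lambda>p. (if p = k then 1 else 0) - (if p = b + a then 1 else 0) - (if p = b + c then 1 else 0)
            - (if p \<in> N then 1 else 0) + (if p \<in> {} then 1 else 0))"
        unfolding w0_def by (simp add: fun_eq_iff)
      have "irr r \<sigma> (\<lambda>p. (if p = k then 1 else 0) - (if p = b + a then 1 else 0) - (if p = b + c then 1 else 0)
            - (if p \<in> N then 1 else 0) + (if p \<in> {} then 1 else 0))"
      proof (rule vec_irr[OF spos kr])
        show "b + a \<in> {1..r}" "b + c \<in> {1..r}" using ib ac by auto
        show "b + a \<noteq> b + c" using ac by simp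
        show "k \<noteq> b + a" "k \<noteq> b + c" using kb ac l4 by auto
        show "N \<subseteq> {1..r}" by (rule Nr)
        show "{} \<subseteq> {1..r}" "N \<inter> {} = {}" by auto
        show "k \<notin> N" "k \<notin> {}" "b + a \<notin> N" "b + a \<notin> {}" "b + c \<notin> N" "b + c \<notin> {}"
          using kN aN ac by auto
        show "\<sigma> k - \<sigma> (b + a) - \<sigma> (b + c) - sum \<sigma> N + sum \<sigma> {} = 0"
        proof -
          have "\<sigma> (b + a) = s" "\<sigma> (b + c) = s" using ib ac by auto
          then show ?thesis using sumN tq unfolding t_def by (simp add: algebra_simps)
        qed
        show "sum \<sigma> {} < \<sigma> (b + a)" "sum \<sigma> {} < \<sigma> (b + c)" using ib ac s1 by auto
        show "\<forall>p\<in>N. sum \<sigma> {} < \<sigma> p" by (rule Npos)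
      qed
      then show "irr r \<sigma> (\<lambda>p. w0 p - (if p = b + a then 1 else 0) - (if p = b + c then 1 else 0))"
        using eq by simp
    qed
  next
    case False
    then have q1': "q = 1" using q1 by simp
    have \<rho>1: "\<rho> \<ge> 1" using st tq q1' \<rho>b unfolding t_def by simp
    obtain P where P: "P \<subseteq> {1..<b}" "sum \<sigma> P = 2 * s - t"
      using subset_sum[OF cm, of b "2 * s - t"] \<rho>b \<rho>1 sumb brange tq q1' by auto
    define w0 :: "nat \<Rightarrow> int" where "w0 p = (if p = k then 1 else 0) + (if p \<in> P then 1 else 0)" for p
    have Pr: "P \<subseteq> {1..r}" using P brange by auto
    have kP: "k \<notin> P" using P kb by auto
    have aP: "\<And>a. b + a \<notin> P" using P by auto
    have sumP: "sum \<sigma> P < s" using P tq q1' \<rho>1 by simp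
    show ?thesis
    proof (intro exI allI impI)
      fix a c :: nat assume ac: "a < 4" "c < 4" "a \<noteq> c"
      have eq: "(\<lambda>p. w0 p - (if p = b + a then 1 else 0) - (if p = b + c then 1 else 0)) =
        (\<lambda>p. (if p = k then 1 else 0) - (if p = b + a then 1 else 0) - (if p = b + c then 1 else 0)
            - (if p \<in> {} then 1 else 0) + (if p \<in> P then 1 else 0))"
        unfolding w0_def by (simp add: fun_eq_iff)
      have "irr r \<sigma> (\<lambda>p. (if p = k then 1 else 0) - (if p = b + a then 1 else 0) - (if p = b + c then 1 else 0)
            - (if p \<in> {} then 1 else 0) + (if p \<in> P then 1 else 0))"
      proof (rule vec_irr[OF spos kr])
        show "b + a \<in> {1..r}" "b + c \<in> {1..r}" using ib ac by auto
        show "b + a \<noteq> b + c" using ac by simp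
        show "k \<noteq> b + a" "k \<noteq> b + c" using kb ac l4 by auto
        show "P \<subseteq> {1..r}" by (rule Pr)
        show "{} \<subseteq> {1..r}" "{} \<inter> P = {}" by auto
        show "k \<notin> {}" "k \<notin> P" "b + a \<notin> {}" "b + a \<notin> P" "b + c \<notin> {}" "b + c \<notin> P"
          using kP aP by auto
        show "\<sigma> k - \<sigma> (b + a) - \<sigma> (b + c) - sum \<sigma> {} + sum \<sigma> P = 0"
          using ib ac P unfolding t_def by simp
        show "sum \<sigma> P < \<sigma> (b + a)" "sum \<sigma> P < \<sigma> (b + c)" using ib ac sumP by auto
        show "\<forall>p\<in>{}. sum \<sigma> P < \<sigma> p" by simp
      qed
      then show "irr r \<sigma> (\<lambda>p. w0 p - (if p = b + a then 1 else 0) - (if p = b + c then 1 else 0))"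
        using eq by simp
    qed
  qed
qed

lemma irr_ne: "irr r \<sigma> x \<Longrightarrow> x \<noteq> (\<lambda>_. 0)" unfolding irr_def by blast
lemma irr_L: "irr r \<sigma> x \<Longrightarrow> x \<in> orth_lattice r \<sigma>" unfolding irr_def by blast

lemma lin_const_zero:
  assumes sb: "sbase r \<sigma> U v" and c: "\<forall>u\<in>U. \<forall>w\<in>U. c u = c w"
  shows "lin U c v = (\<lambda>_. 0)"
proof (cases "U = {}")
  case True then show ?thesis unfolding lin_def by simp
next
  case False
  then obtain u0 where u0: "u0 \<in> U" by blast
  have cu: "\<And>u. u \<in> U \<Longrightarrow> c u = c u0" using c u0 by blast
  have "lin U c v = lin U (\<lambda>_. c u0) v"
    unfolding lin_def by (intro ext sum.cong refl) (simp add: cu)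
  also have "\<dots> = (\<lambda>t. c u0 * lin U (\<lambda>_. 1) v t)" by (rule lin_const)
  also have "\<dots> = (\<lambda>_. 0)" using sb_sum_t[OF sb] by simp
  finally show ?thesis .
qed

lemma sbase_from:
  assumes ob: "obtuse_superbase r k (orth_lattice r \<sigma>) v"
  shows "sbase r \<sigma> {..k} v"
proof -
  have obu: "int_span k v = orth_lattice r \<sigma> \<and>
     (\<forall>i\<le>k. \<forall>j\<le>k. i \<noteq> j \<longrightarrow> pairing r (v i) (v j) \<le> 0) \<and>
     (\<lambda>t. \<Sum>i\<le>k. v i t) = (\<lambda>_. 0)" using ob unfolding obtuse_superbase_def .
  have span: "int_span k v = orth_lattice r \<sigma>" using obu by (rule conjunct1)
  have pw: "\<forall>i\<le>k. \<forall>j\<le>k. i \<noteq> j \<longrightarrow> pairing r (v i) (v j) \<le> 0" using obu by (metis conjunct1 conjunct2)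
  have sm: "(\<lambda>t. \<Sum>i\<le>k. v i t) = (\<lambda>_. 0)" using obu by (metis conjunct2)
  have isp: "int_span k v = {x. \<exists>c. x = lin {..k} c v}" unfolding int_span_def lin_def by simp
  have vL: "\<forall>u\<in>{..k}. v u \<in> orth_lattice r \<sigma>"
  proof
    fix u assume u: "u \<in> {..k}"
    have "lin {..k} (\<lambda>j. if j = u then 1 else 0) v = v u"
    proof
      fix t
      have "lin {..k} (\<lambda>j. if j = u then 1 else 0) v t = (\<Sum>j\<in>{..k}. if j = u then v j t else 0)"
        unfolding lin_def by (intro sum.cong) auto
      also have "\<dots> = v u t" using u by (subst sum.delta) auto
      finally show "lin {..k} (\<lambda>j. if j = u then 1 else 0) v t = v u t" .
    qed
    then have "v u \<in> int_span k v" unfolding isp by (intro CollectI exI[of _ "\<lambda>j. if j = u then 1 else 0"]) simp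
    then show "v u \<in> orth_lattice r \<sigma>" using span by simp
  qed
  have sp: "\<forall>x\<in>orth_lattice r \<sigma>. \<exists>c. x = lin {..k} c v"
  proof
    fix x assume "x \<in> orth_lattice r \<sigma>"
    then have "x \<in> {x. \<exists>c. x = lin {..k} c v}" using span unfolding isp by simp
    then show "\<exists>c. x = lin {..k} c v" by simp
  qed
  have pw': "\<forall>u\<in>{..k}. \<forall>w\<in>{..k}. u \<noteq> w \<longrightarrow> pairing r (v u) (v w) \<le> 0" using pw by auto
  have sm': "lin {..k} (\<lambda>_. 1) v = (\<lambda>_. 0)" unfolding lin_def using sm by simp
  show ?thesis unfolding sbase_def by (intro conjI finite_atMost vL sp pw' sm')
qed

theorem proposition6p2:
  fixes r :: nat and \<sigma> :: "nat \<Rightarrow> int" and l b :: nat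
  assumes "changemaker r \<sigma>"
    and "admits_obtuse_superbase r \<sigma>"
    and "l \<ge> 4" and "b > 1" and "b + l - 1 \<le> r"
    and "\<sigma> (b - 1) < \<sigma> b"
    and "\<forall>i\<in>{b..b + l - 1}. \<sigma> i = \<sigma> b"
  shows "\<forall>k\<in>{1..r}. \<sigma> k > \<sigma> b \<longrightarrow> \<sigma> k \<ge> (int l - 1) * \<sigma> b"
proof (intro ballI impI)
  fix k assume kr: "k \<in> {1..r}" and gt: "\<sigma> k > \<sigma> b"
  note cm = assms(1)
  show "\<sigma> k \<ge> (int l - 1) * \<sigma> b"
  proof (rule ccontr)
    assume "\<not> \<sigma> k \<ge> (int l - 1) * \<sigma> b"
    then have lt: "\<sigma> k < (int l - 1) * \<sigma> b" by simp
    define s where "s = \<sigma> b"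
    have spos: "\<forall>p\<in>{1..r}. \<sigma> p > 0" using cm_pos[OF cm] by force
    have blk: "\<forall>i<l. \<sigma> (b + i) = s"
    proof (intro allI impI)
      fix i assume "i < l"
      then have "b + i \<in> {b..b + l - 1}" by auto
      then show "\<sigma> (b + i) = s" using assms(7) unfolding s_def by blast
    qed
    have kb: "k > b + l - 1"
    proof (rule ccontr)
      assume "\<not> k > b + l - 1"
      then have kle: "k \<le> b + l - 1" by simp
      show False
      proof (cases "k \<ge> b")
        case True
        then have "k \<in> {b..b + l - 1}" using kle by auto
        then have "\<sigma> k = \<sigma> b" using assms(7) by blast
        then show False using gt by simp
      next
        case False
        have "b \<le> r" using assms(3,5) by simp
        then have "\<sigma> k \<le> \<sigma> b" using cm_mono[OF cm, of k b] kr False by auto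
        then show False using gt by simp
      qed
    qed
    obtain w0 where W: "\<forall>a<4. \<forall>c<4. a \<noteq> c \<longrightarrow>
           irr r \<sigma> (\<lambda>p. w0 p - (if p = b + a then 1 else 0) - (if p = b + c then 1 else 0))"
      using w0_exists[OF cm assms(4,3,5) blk kr kb] gt lt unfolding s_def by blast
    have ib: "\<And>a. a < 4 \<Longrightarrow> b + a \<in> {1..r}" using assms(3,4,5) by auto
    have D: "irr r \<sigma> (\<lambda>p. (if p = b + i then 1 else 0) - (if p = b + j then 1 else 0))"
      if "i < 4" "j < 4" "i \<noteq> j" for i j
    proof (rule d_irr[OF spos])
      show "b + i \<in> {1..r}" "b + j \<in> {1..r}" using ib that by auto
      show "b + i \<noteq> b + j" using that by simp
      show "\<sigma> (b + i) = \<sigma> (b + j)" using blk that assms(3) by simp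
    qed
    obtain v where "obtuse_superbase r (r - 1) (orth_lattice r \<sigma>) v"
      using assms(2) unfolding admits_obtuse_superbase_def by blast
    then have "sbase r \<sigma> {..r - 1} v" by (rule sbase_from)
    then obtain U v where sb: "sbase r \<sigma> U v" and cn: "conn U v" using exists_conn by blast
    define dv where "dv i = (\<lambda>p. (if p = b + i then 1 else 0) - (if p = b + 0 then (1::int) else 0))" for i :: nat
    have dvL: "dv i \<in> orth_lattice r \<sigma>" if "i < 4" for i
    proof (cases "i = 0")
      case True
      then have "dv i = (\<lambda>_. 0)" unfolding dv_def by simp
      then show ?thesis unfolding orth_lattice_def zvec_def pairing_def by simp
    next
      case False
      have "irr r \<sigma> (dv i)" using D[of i 0] that False unfolding dv_def by simp
      then show ?thesis by (rule irr_L)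
    qed
    define h where "h i = (SOME c. dv i = lin U c v)" for i
    have hrep: "lin U (h i) v = dv i" if "i < 4" for i
    proof -
      have "\<exists>c. dv i = lin U c v" using sb_span[OF sb dvL[OF that]] .
      then have "dv i = lin U (h i) v" unfolding h_def by (rule someI_ex)
      then show ?thesis by simp
    qed
    define wv where "wv = (\<lambda>p. w0 p - (if p = b + 0 then 1 else 0) - (if p = b + 1 then 1 else 0))"
    have "irr r \<sigma> wv" unfolding wv_def using W[rule_format, of 0 1] by simp
    then have wvL: "wv \<in> orth_lattice r \<sigma>" by (rule irr_L)
    define gw where "gw = (SOME c. wv = lin U c v)"
    have gwrep: "lin U gw v = wv"
    proof -
      have "\<exists>c. wv = lin U c v" using sb_span[OF sb wvL] .
      then have "wv = lin U gw v" unfolding gw_def by (rule someI_ex)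
      then show ?thesis by simp
    qed
    define g where "g u = gw u + h 0 u + h 1 u" for u
    have h01: "lin U (h 0) v = dv 0" "lin U (h 1) v = dv 1" using hrep by auto
    have rep_d: "lin U (\<lambda>u. h i u - h j u) v = (\<lambda>p. (if p = b + i then 1 else 0) - (if p = b + j then 1 else 0))"
      if "i < 4" "j < 4" for i j
      unfolding lin_diff hrep[OF that(1)] hrep[OF that(2)] dv_def by (simp add: fun_eq_iff)
    have rep_w: "lin U (\<lambda>u. g u - h a u - h c u) v =
        (\<lambda>p. w0 p - (if p = b + a then 1 else 0) - (if p = b + c then 1 else 0))"
      if "a < 4" "c < 4" for a c
    proof -
      have "lin U (\<lambda>u. g u - h a u - h c u) v = lin U (\<lambda>u. gw u + h 0 u + h 1 u - h a u - h c u) v"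
        unfolding g_def ..
      also have "\<dots> = (\<lambda>t. lin U gw v t + lin U (h 0) v t + lin U (h 1) v t - lin U (h a) v t - lin U (h c) v t)"
        by (simp only: lin_diff lin_add)
      also have "\<dots> = (\<lambda>p. w0 p - (if p = b + a then 1 else 0) - (if p = b + c then 1 else 0))"
        unfolding gwrep hrep[OF that(1)] hrep[OF that(2)] h01 wv_def dv_def
        by (simp add: fun_eq_iff)
      finally show ?thesis .
    qed
    have "U \<noteq> {}"
    proof
      assume "U = {}"
      then have "lin U (\<lambda>u. h 0 u - h 1 u) v = (\<lambda>_. 0)" unfolding lin_def by simp
      then show False using rep_d[of 0 1] irr_ne[OF D[of 0 1]] by simp
    qed
    then obtain u0 where u0: "u0 \<in> U" by blast
    have "\<exists>a<4. \<exists>c<4. a \<noteq> c \<and> (\<forall>u\<in>U. \<forall>w\<in>U. g u - h a u - h c u = g w - h a w - h c w)"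
    proof (rule core[OF u0])
      fix i j :: nat and u w assume ij: "i < (4::nat)" "j < 4" and uw: "u \<in> U" "w \<in> U"
      show "\<bar>(h i u - h j u) - (h i w - h j w)\<bar> \<le> 1"
      proof (cases "i = j")
        case True then show ?thesis by simp
      next
        case False
        show ?thesis
          by (rule cut_range[OF sb cn D[OF ij False] rep_d[OF ij, symmetric] uw])
      qed
    next
      fix i j :: nat assume ij: "i < (4::nat)" "j < 4" "i \<noteq> j"
      show "\<exists>u\<in>U. \<exists>w\<in>U. h i u - h j u \<noteq> h i w - h j w"
      proof (rule ccontr)
        assume "\<not> (\<exists>u\<in>U. \<exists>w\<in>U. h i u - h j u \<noteq> h i w - h j w)"
        then have "\<forall>u\<in>U. \<forall>w\<in>U. h i u - h j u = h i w - h j w" by blast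
        then have "lin U (\<lambda>u. h i u - h j u) v = (\<lambda>_. 0)" by (rule lin_const_zero[OF sb])
        then show False using rep_d[OF ij(1,2)] irr_ne[OF D[OF ij]] by simp
      qed
    next
      fix a c :: nat and u w assume ac: "a < (4::nat)" "c < 4" "a \<noteq> c" and uw: "u \<in> U" "w \<in> U"
      have "irr r \<sigma> (\<lambda>p. w0 p - (if p = b + a then 1 else 0) - (if p = b + c then 1 else 0))"
        using W ac by blast
      then show "\<bar>(g u - h a u - h c u) - (g w - h a w - h c w)\<bar> \<le> 1"
        using cut_range[OF sb cn _ rep_w[OF ac(1,2), symmetric] uw] by blast
    qed
    then obtain a c where ac: "a < 4" "c < 4" "a \<noteq> c"
      and cst: "\<forall>u\<in>U. \<forall>w\<in>U. g u - h a u - h c u = g w - h a w - h c w" by blast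
    have "lin U (\<lambda>u. g u - h a u - h c u) v = (\<lambda>_. 0)" using lin_const_zero[OF sb cst] .
    moreover have "irr r \<sigma> (\<lambda>p. w0 p - (if p = b + a then 1 else 0) - (if p = b + c then 1 else 0))"
      using W ac by blast
    ultimately show False using rep_w[OF ac(1,2)] irr_ne by metis
  qed
qed

end
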